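(* Fix a constant $c>0$. There is a constant $\varepsilon>0$ (depending only on $c$) such that for every sufficiently large $n$ and every $c$-Ramsey graph $G$ with $n$ vertices, every treelike resolution refutation of $\Psi'_G$ has at least $n^{\varepsilon\log n}$ clauses; i.e. $\Psi'_G$ requires treelike resolution refutations of size $n^{\Omega(\log n)}$.
   Context: Logarithms are base 2. A graph $G$ on $n$ vertices is $c$-Ramsey if no set of $c\log n$ vertices is a clique or an independent set (assume $c\log n$ is an integer). A resolution refutation of a CNF is a sequence of clauses, each a clause of the formula or derived from earlier clauses $A\lor x$, $B\lor\neg x$ as $A\lor B$, ending in the empty clause; it is treelike if each derived clause is used as a premise at most once. The "unary encoding" $\Psi'_G$ has variables $p^i_v$ for $i\in[c\log n]$ and $v\in V(G)$ (meaning index $i$ is mapped to vertex $v$) and a variable $y$, with clauses: for each $i$, $\bigvee_{v}p^i_v$, and $\neg p^i_u\lor\neg p^i_v$ for distinct $u,v$ (each index maps to exactly one vertex); for each vertex $v$ and distinct $i,j$, $\neg p^i_v\lor\neg p^j_v$ (injectivity); for distinct $u,v$ with $\{u,v\}\in E(G)$ and distinct $i,j$, $y\lor\neg p^i_u\lor\neg p^j_v$; for distinct $u,v$ with $\{u,v\}\notin E(G)$ and distinct $i,j$, $\neg y\lor\neg p^i_u\lor\neg p^j_v$. Thus $\Psi'_G$ is satisfiable iff $G$ has a clique or independent set of size $c\log n$. *)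

theory Defs
  imports Complex_Main
begin

definition simple_graph :: "nat \<Rightarrow> nat set set \<Rightarrow> bool" where
  "simple_graph n E \<longleftrightarrow> (\<forall>e\<in>E. \<exists>u v. u < n \<and> v < n \<and> u \<noteq> v \<and> e = {u, v})"

definition is_clique :: "nat set set \<Rightarrow> nat set \<Rightarrow> bool" where
  "is_clique E S \<longleftrightarrow> (\<forall>u\<in>S. \<forall>v\<in>S. u \<noteq> v \<longrightarrow> {u, v} \<in> E)"

definition is_indep :: "nat set set \<Rightarrow> nat set \<Rightarrow> bool" where
  "is_indep E S \<longleftrightarrow> (\<forall>u\<in>S. \<forall>v\<in>S. u \<noteq> v \<longrightarrow> {u, v} \<notin> E)"

text \<open>G (on n vertices) is c-Ramsey: no set of c log n (= k) vertices is a clique or an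
  independent set. Here k is the natural number with real k = c * log 2 n.\<close>
definition ramsey_graph :: "nat \<Rightarrow> nat \<Rightarrow> nat set set \<Rightarrow> bool" where
  "ramsey_graph n k E \<longleftrightarrow>
     (\<forall>S. S \<subseteq> {0..<n} \<and> card S = k \<longrightarrow> \<not> is_clique E S \<and> \<not> is_indep E S)"

datatype 'a lit = Pos 'a | Neg 'a

type_synonym 'a clause = "'a lit set"

datatype pvar = P nat nat | Y  \<comment> \<open>P i v: index i is mapped to vertex v\<close>

definition Psi' :: "nat \<Rightarrow> nat \<Rightarrow> nat set set \<Rightarrow> pvar clause set" where
  "Psi' n k E =
     {{Pos (P i v) | v. v < n} | i. i < k}
   \<union> {{Neg (P i u), Neg (P i v)} | i u v. i < k \<and> u < n \<and> v < n \<and> u \<noteq> v}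
   \<union> {{Neg (P i v), Neg (P j v)} | i j v. v < n \<and> i < k \<and> j < k \<and> i \<noteq> j}
   \<union> {{Pos Y, Neg (P i u), Neg (P j v)} | i j u v.
         u < n \<and> v < n \<and> u \<noteq> v \<and> {u, v} \<in> E \<and> i < k \<and> j < k \<and> i \<noteq> j}
   \<union> {{Neg Y, Neg (P i u), Neg (P j v)} | i j u v.
         u < n \<and> v < n \<and> u \<noteq> v \<and> {u, v} \<notin> E \<and> i < k \<and> j < k \<and> i \<noteq> j}"

text \<open>A resolution proof is a list of lines (C, just). If just = None, C must be a clause
  of the formula; if just = Some (j, l) then j, l are earlier lines, and C is obtained
  from line j (containing x) and line l (containing the negation of x) by resolving on x.\<close>
type_synonym 'a proof_line = "'a clause \<times> (nat \<times> nat) option"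

definition resolvent :: "'a clause \<Rightarrow> 'a clause \<Rightarrow> 'a clause \<Rightarrow> bool" where
  "resolvent A B C \<longleftrightarrow> (\<exists>x. Pos x \<in> A \<and> Neg x \<in> B \<and> C = (A - {Pos x}) \<union> (B - {Neg x}))"

definition valid_line :: "'a clause set \<Rightarrow> 'a proof_line list \<Rightarrow> nat \<Rightarrow> bool" where
  "valid_line F \<pi> i \<longleftrightarrow>
     (case snd (\<pi> ! i) of
        None \<Rightarrow> fst (\<pi> ! i) \<in> F
      | Some (j, l) \<Rightarrow> j < i \<and> l < i \<and> resolvent (fst (\<pi> ! j)) (fst (\<pi> ! l)) (fst (\<pi> ! i)))"

definition refutation :: "'a clause set \<Rightarrow> 'a proof_line list \<Rightarrow> bool" where
  "refutation F \<pi> \<longleftrightarrow> \<pi> \<noteq> [] \<and> (\<forall>i < length \<pi>. valid_line F \<pi> i) \<and> fst (last \<pi>) = {}"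

definition premises_of :: "'a proof_line \<Rightarrow> nat list" where
  "premises_of line = (case snd line of None \<Rightarrow> [] | Some (j, l) \<Rightarrow> [j, l])"

definition uses :: "'a proof_line list \<Rightarrow> nat \<Rightarrow> nat" where
  "uses \<pi> i = length (filter (\<lambda>j. j = i) (concat (map premises_of \<pi>)))"

definition treelike :: "'a proof_line list \<Rightarrow> bool" where
  "treelike \<pi> \<longleftrightarrow> (\<forall>i < length \<pi>. snd (\<pi> ! i) \<noteq> None \<longrightarrow> uses \<pi> i \<le> 1)"

end

theory Submission
  imports Defs "HOL-Combinatorics.Multiset_Permutations"
begin

type_synonym pa = "pvar \<Rightarrow> bool option"

fun lit_false :: "pa \<Rightarrow> pvar lit \<Rightarrow> bool" where
  "lit_false \<rho> (Pos x) = (\<rho> x = Some False)"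
| "lit_false \<rho> (Neg x) = (\<rho> x = Some True)"

fun lvar :: "pvar lit \<Rightarrow> pvar" where
  "lvar (Pos x) = x" | "lvar (Neg x) = x"

definition falsifies :: "pa \<Rightarrow> pvar clause \<Rightarrow> bool" where
  "falsifies \<rho> C \<longleftrightarrow> (\<forall>l\<in>C. lit_false \<rho> l)"

definition homog :: "nat set set \<Rightarrow> bool \<Rightarrow> nat set \<Rightarrow> bool" where
  "homog E t K \<longleftrightarrow> (\<forall>u\<in>K. \<forall>v\<in>K. u \<noteq> v \<longrightarrow> (({u,v} \<in> E) = t))"

definition good :: "bool \<Rightarrow> nat set \<Rightarrow> pa \<Rightarrow> bool" where
  "good t K \<rho> \<longleftrightarrow> \<rho> Y \<noteq> Some (\<not> t)
     \<and> (\<forall>i v. \<rho> (P i v) = Some True \<longrightarrow> v \<in> K)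
     \<and> (\<forall>i u v. \<rho> (P i u) = Some True \<longrightarrow> \<rho> (P i v) = Some True \<longrightarrow> u = v)
     \<and> (\<forall>i j v. \<rho> (P i v) = Some True \<longrightarrow> \<rho> (P j v) = Some True \<longrightarrow> i = j)
     \<and> (\<forall>i v. \<rho> (P i v) = Some False \<longrightarrow> v \<notin> K \<or> (\<exists>w. \<rho> (P i w) = Some True)
            \<or> (\<exists>j. \<rho> (P j v) = Some True))"

definition KK :: "nat \<Rightarrow> nat set set \<Rightarrow> bool \<Rightarrow> nat set set" where
  "KK n E t = {K. K \<subseteq> {0..<n} \<and> homog E t K}"

definition val :: "nat \<Rightarrow> nat set set \<Rightarrow> bool \<Rightarrow> pa \<Rightarrow> nat" where
  "val n E t \<rho> = card {K \<in> KK n E t. good t K \<rho>}"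

lemma finite_KK: "finite (KK n E t)"
  unfolding KK_def by (rule finite_subset[of _ "Pow {0..<n}"]) auto

lemma good_split:
  assumes "good t K \<rho>" "\<rho> x = None"
  shows "good t K (\<rho>(x \<mapsto> False)) \<or> good t K (\<rho>(x \<mapsto> True))"
proof (cases x)
  case Y
  then show ?thesis using assms by (cases t) (auto simp: good_def)
next
  case (P i v)
  note g = assms(1)[unfolded good_def]
  show ?thesis
  proof (cases "v \<notin> K \<or> (\<exists>w. \<rho> (P i w) = Some True) \<or> (\<exists>j. \<rho> (P j v) = Some True)")
    case True
    let ?r = "\<rho>(x \<mapsto> False)"
    have T: "\<And>z. ?r z = Some True \<longleftrightarrow> \<rho> z = Some True" using assms(2) by auto
    have F: "\<And>a b. ?r (P a b) = Some False \<longleftrightarrow> \<rho> (P a b) = Some False \<or> (a = i \<and> b = v)"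
      using P by auto
    have "good t K ?r" unfolding good_def T F using g True P by auto
    then show ?thesis by blast
  next
    case False
    let ?r = "\<rho>(x \<mapsto> True)"
    have T: "\<And>a b. ?r (P a b) = Some True \<longleftrightarrow> \<rho> (P a b) = Some True \<or> (a = i \<and> b = v)"
      using P by auto
    have F: "\<And>z. ?r z = Some False \<longleftrightarrow> \<rho> z = Some False" using assms(2) by auto
    have Y: "?r Y = \<rho> Y" using P by auto
    have "good t K ?r" unfolding good_def T F Y using g False
      by (intro conjI) blast+
    then show ?thesis by blast
  qed
qed

lemma val_split:
  assumes "\<rho> x = None"
  shows "val n E t \<rho> \<le> val n E t (\<rho>(x \<mapsto> False)) + val n E t (\<rho>(x \<mapsto> True))"
proof -
  have "{K \<in> KK n E t. good t K \<rho>} \<subseteq> {K \<in> KK n E t. good t K (\<rho>(x \<mapsto> False))} \<union> {K \<in> KK n E t. good t K (\<rho>(x \<mapsto> True))}"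
    using good_split[of t _ \<rho> x] assms by blast
  then have "val n E t \<rho> \<le> card ({K \<in> KK n E t. good t K (\<rho>(x \<mapsto> False))} \<union> {K \<in> KK n E t. good t K (\<rho>(x \<mapsto> True))})"
    unfolding val_def by (intro card_mono) (auto intro: finite_subset[OF _ finite_KK])
  also have "\<dots> \<le> val n E t (\<rho>(x \<mapsto> False)) + val n E t (\<rho>(x \<mapsto> True))"
    unfolding val_def by (rule card_Un_le)
  finally show ?thesis .
qed

lemma leaf_unique:
  assumes D: "D \<in> Psi' n k E" and f: "falsifies \<rho> D" and K: "K \<in> KK n E t" and g: "good t K \<rho>"
  shows "K = {v. \<exists>i. \<rho> (P i v) = Some True}"
proof -
  have Kn: "K \<subseteq> {0..<n}" and hK: "homog E t K" using K by (auto simp: KK_def)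
  note g' = g[unfolded good_def]
  from D show ?thesis unfolding Psi'_def
  proof (elim UnE)
    assume "D \<in> {{Pos (P i v) | v. v < n} | i. i < k}"
    then obtain i where Di: "D = {Pos (P i v) | v. v < n}" by blast
    have z: "\<And>v. v < n \<Longrightarrow> \<rho> (P i v) = Some False" using f Di by (auto simp: falsifies_def)
    have nw: "\<not> (\<exists>w. \<rho> (P i w) = Some True)"
    proof
      assume "\<exists>w. \<rho> (P i w) = Some True"
      then obtain w where "\<rho> (P i w) = Some True" by blast
      moreover then have "w \<in> K" using g' by blast
      ultimately show False using z Kn by fastforce
    qed
    show ?thesis
    proof
      show "K \<subseteq> {v. \<exists>i. \<rho> (P i v) = Some True}"
      proof
        fix v assume "v \<in> K"
        then have "\<rho> (P i v) = Some False" using z Kn by auto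
        then show "v \<in> {v. \<exists>i. \<rho> (P i v) = Some True}" using g' nw \<open>v \<in> K\<close> by blast
      qed
      show "{v. \<exists>i. \<rho> (P i v) = Some True} \<subseteq> K" using g' by blast
    qed
  next
    assume "D \<in> {{Neg (P i u), Neg (P i v)} | i u v. i < k \<and> u < n \<and> v < n \<and> u \<noteq> v}"
    then show ?thesis using f g' by (auto simp: falsifies_def)
  next
    assume "D \<in> {{Neg (P i v), Neg (P j v)} | i j v. v < n \<and> i < k \<and> j < k \<and> i \<noteq> j}"
    then show ?thesis using f g' by (auto simp: falsifies_def)
  next
    assume "D \<in> {{Pos Y, Neg (P i u), Neg (P j v)} | i j u v.
         u < n \<and> v < n \<and> u \<noteq> v \<and> {u, v} \<in> E \<and> i < k \<and> j < k \<and> i \<noteq> j}"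
    then obtain i j u v where "D = {Pos Y, Neg (P i u), Neg (P j v)}" "u \<noteq> v" "{u,v} \<in> E" by blast
    then show ?thesis using f g' hK by (cases t) (auto simp: falsifies_def homog_def)
  next
    assume "D \<in> {{Neg Y, Neg (P i u), Neg (P j v)} | i j u v.
         u < n \<and> v < n \<and> u \<noteq> v \<and> {u, v} \<notin> E \<and> i < k \<and> j < k \<and> i \<noteq> j}"
    then obtain i j u v where "D = {Neg Y, Neg (P i u), Neg (P j v)}" "u \<noteq> v" "{u,v} \<notin> E" by blast
    then show ?thesis using f g' hK by (cases t) (auto simp: falsifies_def homog_def)
  qed
qed

lemma val_leaf:
  assumes "D \<in> Psi' n k E" "falsifies \<rho> D"
  shows "val n E t \<rho> \<le> 1"
proof -
  have fin: "finite {K \<in> KK n E t. good t K \<rho>}" by (auto intro: finite_subset[OF _ finite_KK])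
  have "\<forall>a\<in>{K \<in> KK n E t. good t K \<rho>}. \<forall>b\<in>{K \<in> KK n E t. good t K \<rho>}. a = b"
    using leaf_unique[OF assms, of _ t] by auto
  then show ?thesis unfolding val_def using card_le_Suc0_iff_eq[OF fin] by simp
qed

lemma val_empty: "val n E t Map.empty = card (KK n E t)"
  unfolding val_def good_def by simp

function Der :: "'a proof_line list \<Rightarrow> nat \<Rightarrow> nat set" where
  "Der \<pi> i = (case snd (\<pi> ! i) of None \<Rightarrow> {}
     | Some (j, l) \<Rightarrow> if j < i \<and> l < i then insert i (Der \<pi> j \<union> Der \<pi> l) else {i})"
  by auto
termination by (relation "measure (\<lambda>(\<pi>, i). i)") auto

declare Der.simps[simp del]

lemma Der_Some: "snd (\<pi> ! i) = Some (j, l) \<Longrightarrow> j < i \<Longrightarrow> l < i \<Longrightarrow> Der \<pi> i = insert i (Der \<pi> j \<union> Der \<pi> l)"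
  by (subst Der.simps) simp

lemma Der_None: "snd (\<pi> ! i) = None \<Longrightarrow> Der \<pi> i = {}"
  by (subst Der.simps) simp

lemma Der_props: "m \<in> Der \<pi> i \<Longrightarrow> m \<le> i \<and> snd (\<pi> ! m) \<noteq> None"
proof (induction \<pi> i rule: Der.induct)
  case (1 \<pi> i)
  show ?case
  proof (cases "snd (\<pi> ! i)")
    case None then show ?thesis using 1 by (simp add: Der_None)
  next
    case (Some p)
    then obtain j l where p: "snd (\<pi> ! i) = Some (j, l)" by (cases p) auto
    show ?thesis
    proof (cases "j < i \<and> l < i")
      case False then show ?thesis using 1(3) p by (subst (asm) Der.simps) auto
    next
      case True
      have D: "Der \<pi> i = insert i (Der \<pi> j \<union> Der \<pi> l)" using Der_Some[OF p] True by simp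
      show ?thesis
      proof (cases "m = i")
        case True then show ?thesis using p by simp
      next
        case False
        then have "m \<in> Der \<pi> j \<or> m \<in> Der \<pi> l" using 1(3) D by auto
        then show ?thesis
          using 1(1)[OF p refl \<open>j < i \<and> l < i\<close>] 1(2)[OF p refl \<open>j < i \<and> l < i\<close>]
            \<open>j < i \<and> l < i\<close> by fastforce
      qed
    qed
  qed
qed

lemma finite_Der: "finite (Der \<pi> i)"
  by (rule finite_subset[of _ "{..i}"]) (auto dest: Der_props)

lemma Der_user: "m \<in> Der \<pi> i \<Longrightarrow> m \<noteq> i \<Longrightarrow> \<exists>a\<in>Der \<pi> i. m \<in> set (premises_of (\<pi> ! a)) \<and> m < a"
proof (induction \<pi> i rule: Der.induct)
  case (1 \<pi> i)
  show ?case
  proof (cases "snd (\<pi> ! i)")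
    case None then show ?thesis using 1 by (simp add: Der_None)
  next
    case (Some p)
    then obtain j l where p: "snd (\<pi> ! i) = Some (j, l)" by (cases p) auto
    show ?thesis
    proof (cases "j < i \<and> l < i")
      case False then show ?thesis using 1 p by (subst (asm) Der.simps) auto
    next
      case True
      have D: "Der \<pi> i = insert i (Der \<pi> j \<union> Der \<pi> l)" using Der_Some[OF p] True by simp
      have pr: "set (premises_of (\<pi> ! i)) = {j, l}" using p by (simp add: premises_of_def)
      have "m \<in> Der \<pi> j \<or> m \<in> Der \<pi> l" using 1(3,4) D by auto
      then show ?thesis
      proof
        assume m: "m \<in> Der \<pi> j"
        show ?thesis
        proof (cases "m = j")
          case True then show ?thesis using D pr \<open>j < i \<and> l < i\<close> by auto
        next
          case False
          then obtain a where "a \<in> Der \<pi> j" "m \<in> set (premises_of (\<pi> ! a)) \<and> m < a"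
            using 1(1)[OF p refl True m] by blast
          then show ?thesis using D by blast
        qed
      next
        assume m: "m \<in> Der \<pi> l"
        show ?thesis
        proof (cases "m = l")
          case True then show ?thesis using D pr \<open>j < i \<and> l < i\<close> by auto
        next
          case False
          then obtain a where "a \<in> Der \<pi> l" "m \<in> set (premises_of (\<pi> ! a)) \<and> m < a"
            using 1(2)[OF p refl True m] by blast
          then show ?thesis using D by blast
        qed
      qed
    qed
  qed
qed

lemma uses_sum: "uses \<pi> m = (\<Sum>a<length \<pi>. length (filter (\<lambda>j. j = m) (premises_of (\<pi> ! a))))"
  unfolding uses_def filter_concat length_concat map_map
  by (simp add: sum_list_sum_nth atLeast0LessThan comp_def)

lemma filter_ge1: "m \<in> set xs \<Longrightarrow> 1 \<le> length (filter (\<lambda>j. j = m) xs)"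
  by (induction xs) auto

lemma unique_user:
  assumes tl: "treelike \<pi>" and m: "m < length \<pi>" "snd (\<pi> ! m) \<noteq> None"
    and a: "a < length \<pi>" "m \<in> set (premises_of (\<pi> ! a))"
    and b: "b < length \<pi>" "m \<in> set (premises_of (\<pi> ! b))"
  shows "a = b"
proof (rule ccontr)
  assume ab: "a \<noteq> b"
  let ?f = "\<lambda>a. length (filter (\<lambda>j. j = m) (premises_of (\<pi> ! a)))"
  have fa: "?f a \<ge> 1" "?f b \<ge> 1" using filter_ge1 a(2) b(2) by auto
  have "?f a + ?f b = (\<Sum>x\<in>{a,b}. ?f x)" using ab by simp
  also have "\<dots> \<le> (\<Sum>x<length \<pi>. ?f x)" using a b by (intro sum_mono2) auto
  finally have "uses \<pi> m \<ge> 2" using fa unfolding uses_sum by linarith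
  then show False using tl m unfolding treelike_def by auto
qed

lemma no_double:
  assumes tl: "treelike \<pi>" and m: "m < length \<pi>" "snd (\<pi> ! m) \<noteq> None"
    and a: "a < length \<pi>" "snd (\<pi> ! a) = Some (m, m)"
  shows False
proof -
  have "uses \<pi> m \<ge> 2"
  proof -
    have "2 = length (filter (\<lambda>j. j = m) (premises_of (\<pi> ! a)))" using a by (simp add: premises_of_def)
    also have "\<dots> \<le> uses \<pi> m" unfolding uses_sum using a by (intro member_le_sum) auto
    finally show ?thesis .
  qed
  then show False using tl m unfolding treelike_def by auto
qed

lemma Der_disj:
  assumes tl: "treelike \<pi>" and v: "\<forall>i<length \<pi>. valid_line F \<pi> i"
    and i: "i < length \<pi>" and p: "snd (\<pi> ! i) = Some (j, l)"
  shows "Der \<pi> j \<inter> Der \<pi> l = {}"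
proof (rule ccontr)
  let ?S = "Der \<pi> j \<inter> Der \<pi> l"
  assume ne: "?S \<noteq> {}"
  have jl: "j < i" "l < i" using v i p by (auto simp: valid_line_def)
  have fin: "finite ?S" using finite_Der by blast
  define m where "m = Max ?S"
  have mS: "m \<in> ?S" using Max_in[OF fin ne] m_def by simp
  have mmax: "\<And>a. a \<in> ?S \<Longrightarrow> a \<le> m" using Max_ge[OF fin] m_def by simp
  have mj: "m \<le> j" "snd (\<pi> ! m) \<noteq> None" using mS Der_props by blast+
  have mlen: "m < length \<pi>" using mj jl i by simp
  have pri: "m \<in> set (premises_of (\<pi> ! i))" if "m = j \<or> m = l" using p that by (auto simp: premises_of_def)
  have userj: "\<exists>a\<in>Der \<pi> j. m \<in> set (premises_of (\<pi> ! a)) \<and> m < a" if "m \<noteq> j" using Der_user mS that by blast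
  have userl: "\<exists>a\<in>Der \<pi> l. m \<in> set (premises_of (\<pi> ! a)) \<and> m < a" if "m \<noteq> l" using Der_user mS that by blast
  have lenj: "\<And>a. a \<in> Der \<pi> j \<Longrightarrow> a < length \<pi> \<and> a < i" using Der_props jl i by fastforce
  have lenl: "\<And>a. a \<in> Der \<pi> l \<Longrightarrow> a < length \<pi> \<and> a < i" using Der_props jl i by fastforce
  show False
  proof (cases "m = j")
    case mj': True
    show ?thesis
    proof (cases "m = l")
      case True
      then show ?thesis using no_double[OF tl mlen mj(2) i] p mj' by simp
    next
      case False
      then obtain a where a: "a \<in> Der \<pi> l" "m \<in> set (premises_of (\<pi> ! a))" using userl by blast
      have "a = i" using unique_user[OF tl mlen mj(2) _ a(2) i pri] lenl[OF a(1)] mj' by blast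
      then show ?thesis using lenl[OF a(1)] by simp
    qed
  next
    case mj': False
    show ?thesis
    proof (cases "m = l")
      case True
      obtain a where a: "a \<in> Der \<pi> j" "m \<in> set (premises_of (\<pi> ! a))" using userj mj' by blast
      have "a = i" using unique_user[OF tl mlen mj(2) _ a(2) i pri] lenj[OF a(1)] True by blast
      then show ?thesis using lenj[OF a(1)] by simp
    next
      case False
      obtain a where a: "a \<in> Der \<pi> j" "m \<in> set (premises_of (\<pi> ! a))" "m < a" using userj mj' by blast
      obtain b where b: "b \<in> Der \<pi> l" "m \<in> set (premises_of (\<pi> ! b))" using userl False by blast
      have "a = b" using unique_user[OF tl mlen mj(2) _ a(2) _ b(2)] lenj[OF a(1)] lenl[OF b(1)] by blast
      then have "a \<in> ?S" using a b by simp
      then show ?thesis using mmax a(3) by fastforce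
    qed
  qed
qed

lemma fals_upd:
  assumes "falsifies \<rho> C" "\<rho> x = None"
  shows "falsifies (\<rho>(x \<mapsto> b)) C"
  unfolding falsifies_def
proof
  fix l assume "l \<in> C"
  then have "lit_false \<rho> l" using assms(1) by (simp add: falsifies_def)
  then show "lit_false (\<rho>(x \<mapsto> b)) l" using assms(2) by (cases l) auto
qed

lemma main_ind:
  assumes tl: "treelike \<pi>" and v: "\<forall>i<length \<pi>. valid_line (Psi' n k E) \<pi> i"
  shows "i < length \<pi> \<Longrightarrow> falsifies \<rho> (fst (\<pi> ! i)) \<Longrightarrow> val n E t \<rho> \<le> card (Der \<pi> i) + 1"
proof (induction i arbitrary: \<rho> rule: less_induct)
  case (less i)
  show ?case
  proof (cases "snd (\<pi> ! i)")
    case None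
    then have "fst (\<pi> ! i) \<in> Psi' n k E" using v less(2) by (auto simp: valid_line_def)
    then have "val n E t \<rho> \<le> 1" using val_leaf less(3) by blast
    then show ?thesis by simp
  next
    case (Some p)
    then obtain j l where p: "snd (\<pi> ! i) = Some (j, l)" by (cases p) auto
    have jl: "j < i" "l < i" and r: "resolvent (fst (\<pi> ! j)) (fst (\<pi> ! l)) (fst (\<pi> ! i))"
      using v less(2) p by (auto simp: valid_line_def)
    then obtain x where x: "Pos x \<in> fst (\<pi> ! j)" "Neg x \<in> fst (\<pi> ! l)"
      "fst (\<pi> ! i) = (fst (\<pi> ! j) - {Pos x}) \<union> (fst (\<pi> ! l) - {Neg x})"
      unfolding resolvent_def by blast
    have D: "Der \<pi> i = insert i (Der \<pi> j \<union> Der \<pi> l)" using Der_Some[OF p jl] .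
    have dis: "Der \<pi> j \<inter> Der \<pi> l = {}" using Der_disj[OF tl v less(2) p] .
    have ni: "i \<notin> Der \<pi> j \<union> Der \<pi> l" using Der_props jl by fastforce
    have cD: "card (Der \<pi> i) = card (Der \<pi> j) + card (Der \<pi> l) + 1"
    proof -
      have "card (Der \<pi> j \<union> Der \<pi> l) = card (Der \<pi> j) + card (Der \<pi> l)"
        by (rule card_Un_disjoint[OF finite_Der finite_Der dis])
      moreover have "finite (Der \<pi> j \<union> Der \<pi> l)" using finite_Der[of \<pi> j] finite_Der[of \<pi> l] by simp
      ultimately show ?thesis using D ni card_insert_disjoint by simp
    qed
    have fA: "falsifies \<sigma> (fst (\<pi> ! j))" if "falsifies \<sigma> (fst (\<pi> ! i))" "\<sigma> x = Some False" for \<sigma>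
      using that x unfolding falsifies_def by auto
    have fB: "falsifies \<sigma> (fst (\<pi> ! l))" if "falsifies \<sigma> (fst (\<pi> ! i))" "\<sigma> x = Some True" for \<sigma>
      using that x unfolding falsifies_def by auto
    have IHj: "val n E t \<sigma> \<le> card (Der \<pi> j) + 1" if "falsifies \<sigma> (fst (\<pi> ! j))" for \<sigma>
      using less(1)[OF jl(1)] less(2) jl that by simp
    have IHl: "val n E t \<sigma> \<le> card (Der \<pi> l) + 1" if "falsifies \<sigma> (fst (\<pi> ! l))" for \<sigma>
      using less(1)[OF jl(2)] less(2) jl that by simp
    show ?thesis
    proof (cases "\<rho> x")
      case None
      have "val n E t \<rho> \<le> val n E t (\<rho>(x \<mapsto> False)) + val n E t (\<rho>(x \<mapsto> True))"
        by (rule val_split[of \<rho> x, OF None])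
      also have "\<dots> \<le> (card (Der \<pi> j) + 1) + (card (Der \<pi> l) + 1)"
        using IHj[OF fA[OF fals_upd[OF less(3) None, of False]]] IHl[OF fB[OF fals_upd[OF less(3) None, of True]]]
        by simp
      finally show ?thesis using cD by simp
    next
      case (Some b)
      then show ?thesis
      proof (cases b)
        case True
        then show ?thesis using IHl[OF fB[OF less(3)]] Some cD by simp
      next
        case False
        then show ?thesis using IHj[OF fA[OF less(3)]] Some cD by simp
      qed
    qed
  qed
qed

lemma refutation_bound:
  assumes "refutation (Psi' n k E) \<pi>" "treelike \<pi>"
  shows "card (KK n E t) \<le> length \<pi> + 1"
proof -
  have ne: "\<pi> \<noteq> []" and v: "\<forall>i<length \<pi>. valid_line (Psi' n k E) \<pi> i" and e: "fst (last \<pi>) = {}"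
    using assms(1) by (auto simp: refutation_def)
  let ?i = "length \<pi> - 1"
  have i: "?i < length \<pi>" using ne by simp
  have "fst (\<pi> ! ?i) = {}" using e ne by (simp add: last_conv_nth)
  then have f: "falsifies Map.empty (fst (\<pi> ! ?i))" by (simp add: falsifies_def)
  have "card (KK n E t) \<le> card (Der \<pi> ?i) + 1"
    using main_ind[OF assms(2) v i f, of t] val_empty by simp
  also have "card (Der \<pi> ?i) \<le> card {..<length \<pi>}"
    by (rule card_mono) (use Der_props i in fastforce)+
  finally show ?thesis by simp
qed

definition hl :: "nat set set \<Rightarrow> bool \<Rightarrow> nat set \<Rightarrow> nat \<Rightarrow> nat list set" where
  "hl E t V a = {xs. distinct xs \<and> length xs = a \<and> set xs \<subseteq> V \<and> homog E t (set xs)}"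

definition Nb :: "nat set set \<Rightarrow> bool \<Rightarrow> nat \<Rightarrow> nat set \<Rightarrow> nat set" where
  "Nb E t v V = {w \<in> V. w \<noteq> v \<and> (({v,w} \<in> E) = t)}"

lemma hl_finite: "finite V \<Longrightarrow> finite (hl E t V a)"
  unfolding hl_def by (rule finite_subset[OF _ finite_lists_length_eq[of V a]]) auto

lemma hl_mono: "V \<subseteq> W \<Longrightarrow> hl E t V a \<subseteq> hl E t W a"
  unfolding hl_def by auto

lemma hl_zero: "hl E t V 0 = {[]}"
  unfolding hl_def homog_def by auto

lemma hl_cons:
  assumes fin: "finite V" and W: "W \<subseteq> V"
  shows "(\<Sum>v\<in>W. card (hl E t (Nb E t v V) a)) \<le> card (hl E t V (Suc a))"
proof -
  have finW: "finite W" using fin W finite_subset by blast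
  have sub: "(\<Union>v\<in>W. (Cons v) ` hl E t (Nb E t v V) a) \<subseteq> hl E t V (Suc a)"
  proof (clarify)
    fix v xs assume v: "v \<in> W" and xs: "xs \<in> hl E t (Nb E t v V) a"
    have "v \<notin> set xs" "set xs \<subseteq> V" "distinct xs" "length xs = a" "homog E t (set xs)"
      and nb: "\<And>w. w \<in> set xs \<Longrightarrow> (({v,w} \<in> E) = t)"
      using xs unfolding hl_def Nb_def by auto
    moreover have "homog E t (insert v (set xs))"
      using \<open>homog E t (set xs)\<close> nb unfolding homog_def by (metis insert_commute insert_iff)
    ultimately show "v # xs \<in> hl E t V (Suc a)" using v W unfolding hl_def by auto
  qed
  have "(\<Sum>v\<in>W. card (hl E t (Nb E t v V) a)) = (\<Sum>v\<in>W. card ((Cons v) ` hl E t (Nb E t v V) a))"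
    by (intro sum.cong refl) (simp add: card_image)
  also have "\<dots> = card (\<Union>v\<in>W. (Cons v) ` hl E t (Nb E t v V) a)"
    by (rule card_UN_disjoint[symmetric]) (auto simp: finW intro!: finite_imageI hl_finite simp: Nb_def fin)
  also have "\<dots> \<le> card (hl E t V (Suc a))"
    by (rule card_mono[OF hl_finite[OF fin] sub])
  finally show ?thesis .
qed

lemma nb_card:
  assumes fin: "finite V" and v: "v \<in> V"
  shows "card (Nb E True v V) + card (Nb E False v V) = card V - 1"
proof -
  have "Nb E True v V \<union> Nb E False v V = V - {v}" "Nb E True v V \<inter> Nb E False v V = {}"
    unfolding Nb_def by auto
  moreover have "finite (Nb E True v V)" "finite (Nb E False v V)" using fin unfolding Nb_def by auto
  ultimately show ?thesis using card_Un_disjoint v fin by (metis card_Diff_singleton)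
qed

lemma ES:
  fixes x :: nat
  shows "\<forall>a b (V::nat set). a + b = m \<longrightarrow> finite V \<longrightarrow> 2 * x * 2 ^ (a + b) \<le> card V \<longrightarrow>
    x ^ a \<le> card (hl E True V a) \<or> x ^ b \<le> card (hl E False V b)"
proof (induction m)
  case 0
  then show ?case by (simp add: hl_zero)
next
  case (Suc m)
  show ?case
  proof (intro allI impI)
    fix a b and V :: "nat set" assume ab: "a + b = Suc m" and fin: "finite V" and cV: "2 * x * 2 ^ (a + b) \<le> card V"
    show "x ^ a \<le> card (hl E True V a) \<or> x ^ b \<le> card (hl E False V b)"
    proof (cases "a = 0 \<or> b = 0")
      case True then show ?thesis by (auto simp: hl_zero)
    next
      case False
      then obtain a' b' where a': "a = Suc a'" and b': "b = Suc b'" by (metis not0_implies_Suc)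
      define T where "T = 2 * x * 2 ^ m"
      have cV': "2 * T \<le> card V" using cV ab unfolding T_def by (simp add: algebra_simps)
      define V1 where "V1 = {v \<in> V. T \<le> card (Nb E True v V)}"
      define V0 where "V0 = {v \<in> V. T \<le> card (Nb E False v V)}"
      have cover: "V \<subseteq> V1 \<union> V0"
      proof
        fix v assume v: "v \<in> V"
        have "card (Nb E True v V) + card (Nb E False v V) = card V - 1" using nb_card[OF fin v] .
        then have "T \<le> card (Nb E True v V) \<or> T \<le> card (Nb E False v V)" using cV' by linarith
        then show "v \<in> V1 \<union> V0" using v unfolding V1_def V0_def by auto
      qed
      have "card V \<le> card V1 + card V0"
        using card_mono[OF _ cover] card_Un_le[of V1 V0] fin unfolding V1_def V0_def by fastforce
      moreover have "2 * x \<le> card V" using cV by (metis le_trans mult_le_mono2 one_le_power nat_mult_1_right one_le_numeral)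
      ultimately have "x \<le> card V1 \<or> x \<le> card V0" by linarith
      then show ?thesis
      proof
        assume x1: "x \<le> card V1"
        show ?thesis
        proof (cases "\<exists>v\<in>V1. x ^ b \<le> card (hl E False (Nb E True v V) b)")
          case True
          then obtain v where "v \<in> V1" "x ^ b \<le> card (hl E False (Nb E True v V) b)" by blast
          moreover have "card (hl E False (Nb E True v V) b) \<le> card (hl E False V b)"
            by (rule card_mono[OF hl_finite[OF fin] hl_mono]) (auto simp: Nb_def)
          ultimately show ?thesis by linarith
        next
          case False
          have each: "x ^ a' \<le> card (hl E True (Nb E True v V) a')" if "v \<in> V1" for v
          proof -
            have "finite (Nb E True v V)" using fin by (simp add: Nb_def)
            moreover have "2 * x * 2 ^ (a' + b) \<le> card (Nb E True v V)"
              using that ab a' unfolding V1_def T_def by simp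
            ultimately show ?thesis using Suc.IH ab a' False that by auto
          qed
          have "x ^ a = x * x ^ a'" using a' by simp
          also have "\<dots> \<le> card V1 * x ^ a'" using x1 by simp
          also have "\<dots> = (\<Sum>v\<in>V1. x ^ a')" by simp
          also have "\<dots> \<le> (\<Sum>v\<in>V1. card (hl E True (Nb E True v V) a'))" by (intro sum_mono each)
          also have "\<dots> \<le> card (hl E True V a)" using hl_cons[OF fin, of V1 E True a'] a' unfolding V1_def by auto
          finally show ?thesis by simp
        qed
      next
        assume x0: "x \<le> card V0"
        show ?thesis
        proof (cases "\<exists>v\<in>V0. x ^ a \<le> card (hl E True (Nb E False v V) a)")
          case True
          then obtain v where "v \<in> V0" "x ^ a \<le> card (hl E True (Nb E False v V) a)" by blast
          moreover have "card (hl E True (Nb E False v V) a) \<le> card (hl E True V a)"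
            by (rule card_mono[OF hl_finite[OF fin] hl_mono]) (auto simp: Nb_def)
          ultimately show ?thesis by linarith
        next
          case False
          have each: "x ^ b' \<le> card (hl E False (Nb E False v V) b')" if "v \<in> V0" for v
          proof -
            have "finite (Nb E False v V)" using fin by (simp add: Nb_def)
            moreover have "2 * x * 2 ^ (a + b') \<le> card (Nb E False v V)"
              using that ab b' unfolding V0_def T_def by simp
            ultimately show ?thesis using Suc.IH ab b' False that by auto
          qed
          have "x ^ b = x * x ^ b'" using b' by simp
          also have "\<dots> \<le> card V0 * x ^ b'" using x0 by simp
          also have "\<dots> = (\<Sum>v\<in>V0. x ^ b')" by simp
          also have "\<dots> \<le> (\<Sum>v\<in>V0. card (hl E False (Nb E False v V) b'))" by (intro sum_mono each)
          also have "\<dots> \<le> card (hl E False V b)" using hl_cons[OF fin, of V0 E False b'] b' unfolding V0_def by auto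
          finally show ?thesis by simp
        qed
      qed
    qed
  qed
qed

lemma hl_KK: "card (hl E t {0..<n} s) \<le> card (KK n E t) * fact s"
proof -
  let ?S = "{K \<in> KK n E t. card K = s}"
  have "hl E t {0..<n} s \<subseteq> (\<Union>K\<in>?S. permutations_of_set K)"
    unfolding hl_def permutations_of_set_def KK_def by (auto simp: distinct_card)
  then have "card (hl E t {0..<n} s) \<le> card (\<Union>K\<in>?S. permutations_of_set K)"
    by (intro card_mono) (auto intro!: finite_UN_I intro: finite_subset[OF _ finite_KK])
  also have "\<dots> \<le> (\<Sum>K\<in>?S. card (permutations_of_set K))" by (rule card_UN_le) (auto intro: finite_subset[OF _ finite_KK])
  also have "\<dots> = (\<Sum>K\<in>?S. fact s)"
  proof (intro sum.cong refl)
    fix K assume "K \<in> ?S"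
    then have "finite K" "card K = s" unfolding KK_def by (auto intro: finite_subset)
    then show "card (permutations_of_set K) = fact s" by simp
  qed
  also have "\<dots> = card ?S * fact s" by simp
  also have "\<dots> \<le> card (KK n E t) * fact s" by (intro mult_right_mono card_mono finite_KK) auto
  finally show ?thesis .
qed

lemma many_homog:
  assumes "2 * 16 ^ s \<le> n"
  shows "\<exists>t. 2 ^ (s * s) \<le> card (KK n E t)"
proof -
  have "2 * 4 ^ s * 2 ^ (s + s) \<le> card {0..<n}"
    using assms by (simp add: power_add power_mult_distrib[symmetric] mult.assoc flip: power_mult_distrib)
  then have "(4 ^ s) ^ s \<le> card (hl E True {0..<n} s) \<or> (4 ^ s) ^ s \<le> card (hl E False {0..<n} s)"
    using ES[of "s + s" "4 ^ s" E] by auto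
  then obtain t where t: "(4 ^ s) ^ s \<le> card (hl E t {0..<n} s)" by blast
  have f: "fact s \<le> (2::nat) ^ (s * s)"
  proof -
    have "fact s \<le> s ^ s" using fact_le_power[where 'a = nat] by simp
    also have "\<dots> \<le> (2 ^ s) ^ s" by (intro power_mono) (simp_all add: less_imp_le)
    finally show ?thesis by (simp add: power_mult)
  qed
  have "(2::nat) ^ (s * s) * 2 ^ (s * s) = (4 ^ s) ^ s"
    by (simp add: power_mult[symmetric] power_mult_distrib[symmetric] flip: power_add)
  also have "\<dots> \<le> card (KK n E t) * fact s" using t hl_KK[of E t n s] by linarith
  also have "\<dots> \<le> card (KK n E t) * 2 ^ (s * s)" using f by simp
  finally have "2 ^ (s * s) \<le> card (KK n E t)" by simp
  then show ?thesis by blast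
qed

lemma numeric:
  fixes n :: nat
  assumes n: "n \<ge> 2 ^ 32"
  defines "L \<equiv> log 2 (real n)"
  defines "s \<equiv> nat \<lfloor>L / 8\<rfloor>"
  shows "2 * 16 ^ s \<le> n" "real n powr (1/512 * L) \<le> 2 ^ (s * s) - 1"
proof -
  have npos: "real n > 0" using n by (simp add: less_le_trans[of 0 "2^32"])
  have L32: "L \<ge> 32"
  proof -
    have "real (2 ^ 32) \<le> real n" using n by linarith
    then have "log 2 (2 powr 32) \<le> L" unfolding L_def by (subst log_le_cancel_iff) (auto simp: powr_realpow)
    moreover have "log 2 (2 powr 32) = (32::real)" by (rule log_powr_cancel) auto
    ultimately show ?thesis by simp
  qed
  have nL: "real n = 2 powr L" unfolding L_def using npos by simp
  have s1: "real s \<le> L / 8" unfolding s_def using L32 by linarith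
  have s2: "real s \<ge> L / 8 - 1" unfolding s_def using L32 by linarith
  have "real (2 * 16 ^ s) = 2 powr (4 * real s + 1)"
    by (simp add: powr_add powr_realpow[symmetric] powr_mult[symmetric] powr_powr[symmetric])
  also have "\<dots> \<le> 2 powr L" using s1 L32 by (intro powr_mono) auto
  also have "\<dots> = real n" using nL by simp
  finally have h: "real (2 * 16 ^ s) \<le> real n" .
  then show "2 * 16 ^ s \<le> n" by (simp only: of_nat_le_iff)
  define X where "X = 2 powr (L * L / 512)"
  have X4: "X \<ge> 4"
  proof -
    have "(4::real) = 2 powr 2" by simp
    also have "\<dots> \<le> X" unfolding X_def using L32 mult_mono[of 32 L 32 L] by (intro powr_mono) auto
    finally show ?thesis .
  qed
  have "real n powr (1/512 * L) = X" unfolding X_def nL powr_powr by (simp add: algebra_simps)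
  also have "\<dots> \<le> X * X - 1" using X4 mult_right_mono[OF X4, of X] by linarith
  also have "X * X = 2 powr (L * L / 256)" unfolding X_def by (simp add: powr_add[symmetric])
  also have "\<dots> \<le> 2 powr (real s * real s)"
  proof (intro powr_mono)
    have "L / 16 \<le> real s" using s2 L32 by linarith
    then have "(L/16) * (L/16) \<le> real s * real s" using L32 by (intro mult_mono) auto
    then show "L * L / 256 \<le> real s * real s" by simp
  qed simp
  also have "\<dots> = real (2 ^ (s * s))" by (simp add: powr_realpow[symmetric])
  finally show "real n powr (1/512 * L) \<le> 2 ^ (s * s) - 1" by simp
qed

theorem mainTheorem3:
  fixes c :: real
  assumes "c > 0"
  shows "\<exists>\<epsilon>::real. \<epsilon> > 0 \<and> (\<exists>N::nat. \<forall>n k E \<pi>. n \<ge> N \<longrightarrow>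
           real k = c * log 2 (real n) \<longrightarrow> simple_graph n E \<longrightarrow> ramsey_graph n k E \<longrightarrow>
           refutation (Psi' n k E) \<pi> \<longrightarrow> treelike \<pi> \<longrightarrow>
           real (length \<pi>) \<ge> real n powr (\<epsilon> * log 2 (real n)))"
proof (intro exI conjI allI impI)
  show "(1/512::real) > 0" by simp
  fix n k E and \<pi> :: "pvar proof_line list"
  assume n: "2 ^ 32 \<le> n" and r: "refutation (Psi' n k E) \<pi>" and tl: "treelike \<pi>"
  define s where "s = nat \<lfloor>log 2 (real n) / 8\<rfloor>"
  note num = numeric[OF n, folded s_def]
  obtain t where t: "2 ^ (s * s) \<le> card (KK n E t)" using many_homog[OF num(1)] by blast
  have "card (KK n E t) \<le> length \<pi> + 1" using refutation_bound[OF r tl] .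
  then have "real (2 ^ (s * s)) \<le> real (length \<pi>) + 1" using t by linarith
  then show "real n powr (1/512 * log 2 (real n)) \<le> real (length \<pi>)" using num(2) by simp
qed

end
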